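(* Let $(C_i\subseteq\mathbb F_q^{n_i})_{i\in[t]}$, $t\ge2$, be classical codes with product-expansion $\rho>0$, and suppose $C_t\neq\mathbb F_q^{n_t}$. Then the subcollection $(C_i)_{i\in[t-1]}$ has product-expansion at least $\rho$.
   Context: Product-expansion: For codes $C_1\subseteq\mathbb F_q^{n_1},\dots,C_t\subseteq\mathbb F_q^{n_t}$, identify $\mathbb F_q^{n_1}\otimes\cdots\otimes\mathbb F_q^{n_t}$ with $t$-dimensional arrays; a direction-$i$ column is the vector in $\mathbb F_q^{n_i}$ obtained by fixing all coordinates except the $i$-th. $C^{(i)}$ is the space of arrays all of whose direction-$i$ columns lie in $C_i$, and $C_1\boxplus\cdots\boxplus C_t=C^{(1)}+\cdots+C^{(t)}$. $|c|$ is the number of nonzero entries of an array, $|c|_i$ its number of nonzero direction-$i$ columns. The product-expansion of $(C_i)_{i\in[t]}$ is the largest $\rho\ge0$ such that every $c\in C_1\boxplus\cdots\boxplus C_t$ has a decomposition $c=c_1+\cdots+c_t$ with $c_i\in C^{(i)}$ and $|c|\ge\rho\sum_in_i|c_i|_i$. *)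

theory Defs
  imports Main "HOL-Library.Extended_Real"
begin

text \<open>The field F_q is a finite field type 'a (q = CARD('a)).
  A t-dimensional array of shape n_0 x ... x n_(t-1) (indices 0-based) is a function
  (nat => nat) => 'a vanishing outside the box below.\<close>

definition vecs :: "nat \<Rightarrow> (nat \<Rightarrow> 'a::zero) set" where
  "vecs m = {v. \<forall>j\<ge>m. v j = 0}"

definition linear_code :: "nat \<Rightarrow> (nat \<Rightarrow> 'a::field) set \<Rightarrow> bool" where
  "linear_code m C \<longleftrightarrow> C \<subseteq> vecs m \<and> (\<lambda>_. 0) \<in> C \<and>
     (\<forall>u\<in>C. \<forall>v\<in>C. (\<lambda>j. u j + v j) \<in> C) \<and>
     (\<forall>a. \<forall>v\<in>C. (\<lambda>j. a * v j) \<in> C)"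

definition box :: "(nat \<Rightarrow> nat) \<Rightarrow> nat \<Rightarrow> (nat \<Rightarrow> nat) set" where
  "box n t = {x. (\<forall>i<t. x i < n i) \<and> (\<forall>i\<ge>t. x i = 0)}"

definition arrays :: "(nat \<Rightarrow> nat) \<Rightarrow> nat \<Rightarrow> ((nat \<Rightarrow> nat) \<Rightarrow> 'a::zero) set" where
  "arrays n t = {c. \<forall>x. x \<notin> box n t \<longrightarrow> c x = 0}"

definition col :: "(nat \<Rightarrow> nat) \<Rightarrow> ((nat \<Rightarrow> nat) \<Rightarrow> 'a::zero) \<Rightarrow> (nat \<Rightarrow> nat) \<Rightarrow> nat \<Rightarrow> (nat \<Rightarrow> 'a)" where
  "col n c x i = (\<lambda>j. if j < n i then c (x(i := j)) else 0)"

definition dir_code :: "(nat \<Rightarrow> nat) \<Rightarrow> nat \<Rightarrow> (nat \<Rightarrow> (nat \<Rightarrow> 'a::zero) set) \<Rightarrow> nat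
    \<Rightarrow> ((nat \<Rightarrow> nat) \<Rightarrow> 'a) set" where
  "dir_code n t C i = {c \<in> arrays n t. \<forall>x\<in>box n t. col n c x i \<in> C i}"

definition boxplus :: "(nat \<Rightarrow> nat) \<Rightarrow> nat \<Rightarrow> (nat \<Rightarrow> (nat \<Rightarrow> 'a::comm_monoid_add) set)
    \<Rightarrow> ((nat \<Rightarrow> nat) \<Rightarrow> 'a) set" where
  "boxplus n t C = {c. \<exists>cs. (\<forall>i<t. cs i \<in> dir_code n t C i) \<and> c = (\<lambda>x. \<Sum>i<t. cs i x)}"

definition wt :: "(nat \<Rightarrow> nat) \<Rightarrow> nat \<Rightarrow> ((nat \<Rightarrow> nat) \<Rightarrow> 'a::zero) \<Rightarrow> nat" where
  "wt n t c = card {x \<in> box n t. c x \<noteq> 0}"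

text \<open>|c|_i: number of nonzero direction-i columns (each column represented by its
  position with i-th coordinate 0).\<close>
definition col_wt :: "(nat \<Rightarrow> nat) \<Rightarrow> nat \<Rightarrow> ((nat \<Rightarrow> nat) \<Rightarrow> 'a::zero) \<Rightarrow> nat \<Rightarrow> nat" where
  "col_wt n t c i = card {x \<in> box n t. x i = 0 \<and> col n c x i \<noteq> (\<lambda>_. 0)}"

definition has_pe :: "(nat \<Rightarrow> nat) \<Rightarrow> nat \<Rightarrow> (nat \<Rightarrow> (nat \<Rightarrow> 'a::comm_monoid_add) set) \<Rightarrow> real \<Rightarrow> bool" where
  "has_pe n t C \<rho> \<longleftrightarrow> (\<forall>c\<in>boxplus n t C. \<exists>cs. (\<forall>i<t. cs i \<in> dir_code n t C i) \<and>
      c = (\<lambda>x. \<Sum>i<t. cs i x) \<and>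
      real (wt n t c) \<ge> \<rho> * (\<Sum>i<t. real (n i) * real (col_wt n t (cs i) i)))"

text \<open>Product-expansion: the largest such rho \<ge> 0 (as an extended real, in order to
  cover the degenerate case where every rho works).\<close>
definition product_expansion :: "(nat \<Rightarrow> nat) \<Rightarrow> nat \<Rightarrow> (nat \<Rightarrow> (nat \<Rightarrow> 'a::comm_monoid_add) set) \<Rightarrow> ereal" where
  "product_expansion n t C = Sup {ereal \<rho> | \<rho>. \<rho> \<ge> 0 \<and> has_pe n t C \<rho>}"

end

theory Submission imports Defs "HOL-Library.Function_Algebras" "HOL-Library.FuncSet" begin

lemma functional_exists:
  fixes Ck :: "(nat \<Rightarrow> 'a::field) set"
  assumes lc: "linear_code m Ck" and e: "e \<notin> Ck"
  shows "\<exists>g. Vector_Spaces.linear (\<lambda>a v l. a * v l) ((*)::'a\<Rightarrow>'a\<Rightarrow>'a) g \<and> g e = 1 \<and> (\<forall>v\<in>Ck. g v = 0)"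
proof -
  interpret V: vector_space "\<lambda>a (v::nat\<Rightarrow>'a) l. a * v l"
    by unfold_locales (auto simp: algebra_simps fun_eq_iff)
  interpret F: vector_space "(*)::'a\<Rightarrow>'a\<Rightarrow>'a"
    by unfold_locales (auto simp: algebra_simps)
  interpret P: vector_space_pair "\<lambda>a (v::nat\<Rightarrow>'a) l. a * v l" "(*)::'a\<Rightarrow>'a\<Rightarrow>'a" ..
  have sub: "V.subspace Ck"
    using lc unfolding linear_code_def V.subspace_def zero_fun_def plus_fun_def by auto
  obtain B where B: "B \<subseteq> Ck" "V.independent B" "Ck \<subseteq> V.span B"
    by (rule V.maximal_independent_subset)
  have spB: "V.span B \<subseteq> Ck" using V.span_minimal[OF B(1) sub] .
  have "e \<notin> V.span B" using spB e by auto
  hence ind: "V.independent (insert e B)" using V.independent_insertI B(2) by blast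
  obtain g where g: "Vector_Spaces.linear (\<lambda>a v l. a * v l) ((*)::'a\<Rightarrow>'a\<Rightarrow>'a) g"
     "\<forall>x\<in>insert e B. g x = (if x = e then 1 else 0)"
    using P.linear_independent_extend[OF ind, of "\<lambda>x. if x = e then 1 else 0"] by blast
  interpret G: Vector_Spaces.linear "\<lambda>a (v::nat\<Rightarrow>'a) l. a * v l" "(*)::'a\<Rightarrow>'a\<Rightarrow>'a" g by fact
  have "\<forall>v\<in>Ck. g v = 0"
  proof
    fix v assume "v \<in> Ck"
    hence "v \<in> V.span B" using B(3) by auto
    moreover have "\<And>x. x \<in> B \<Longrightarrow> g x = 0" using g(2) \<open>e \<notin> V.span B\<close> V.span_base by force
    ultimately show "g v = 0" using G.eq_0_on_span by blast
  qed
  thus ?thesis using g by auto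
qed

lemma sum_fun_apply: "(sum F A) (x::nat) = (\<Sum>a\<in>A. F a x :: 'a::comm_monoid_add)"
  by (induction A rule: infinite_finite_induct) auto

lemma lc_sum:
  assumes lc: "linear_code m C" and fin: "finite I" and u: "\<forall>i\<in>I. u i \<in> C"
  shows "(\<lambda>j. \<Sum>i\<in>I. u i j) \<in> C"
  using fin u
proof (induction I rule: finite_induct)
  case empty then show ?case using lc by (simp add: linear_code_def)
next
  case (insert x F)
  have add: "\<And>a b. a \<in> C \<Longrightarrow> b \<in> C \<Longrightarrow> (\<lambda>j. a j + b j) \<in> C"
    using lc unfolding linear_code_def by blast
  have "(\<lambda>j. \<Sum>i\<in>F. u i j) \<in> C" using insert by simp
  moreover have "u x \<in> C" using insert by simp
  ultimately have "(\<lambda>j. u x j + (\<Sum>i\<in>F. u i j)) \<in> C" by (rule add[rotated])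
  then show ?case using insert by simp
qed

lemma lc_comb:
  assumes lc: "linear_code m C" and fin: "finite I" and u: "\<forall>i\<in>I. u i \<in> C"
  shows "(\<lambda>j. \<Sum>i\<in>I. a i * u i j) \<in> C"
proof -
  have "\<forall>i\<in>I. (\<lambda>j. a i * u i j) \<in> C" using lc u unfolding linear_code_def by blast
  from lc_sum[OF lc fin this] show ?thesis .
qed

definition ev :: "nat \<Rightarrow> nat \<Rightarrow> 'a::field" where "ev j = (\<lambda>l. if l = j then 1 else 0)"

lemma sum_ev: "(\<Sum>j\<in>{..<m}. v j * ev j l) = (if l < m then v l::'a::field else 0)"
proof -
  have "(\<Sum>j\<in>{..<m}. v j * ev j l) = (\<Sum>j\<in>{..<m}. if l = j then v j else 0)"
    by (rule sum.cong) (auto simp: ev_def)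
  then show ?thesis by simp
qed

lemma exists_ev_notin:
  fixes C :: "(nat \<Rightarrow> 'a::field) set"
  assumes lc: "linear_code m C" and ne: "C \<noteq> vecs m"
  shows "\<exists>j<m. ev j \<notin> C"
proof (rule ccontr)
  assume "\<not> ?thesis"
  hence all: "\<forall>j\<in>{..<m}. ev j \<in> C" by auto
  have "vecs m \<subseteq> C"
  proof
    fix v :: "nat \<Rightarrow> 'a" assume v: "v \<in> vecs m"
    have "(\<lambda>l. \<Sum>j\<in>{..<m}. v j * ev j l) \<in> C" by (rule lc_comb[OF lc _ all]) simp
    moreover have "(\<lambda>l. \<Sum>j\<in>{..<m}. v j * ev j l) = v"
    proof
      fix l show "(\<Sum>j\<in>{..<m}. v j * ev j l) = v l"
        using v by (auto simp: sum_ev vecs_def)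
    qed
    ultimately show "v \<in> C" by simp
  qed
  with lc ne show False unfolding linear_code_def by blast
qed

lemma functional2:
  fixes C :: "(nat \<Rightarrow> 'a::field) set"
  assumes lc: "linear_code m C" and e: "ev j \<notin> C"
  shows "\<exists>f. f j = 1 \<and> (\<forall>v\<in>C. (\<Sum>l<m. f l * v l) = 0)"
proof -
  obtain g where g: "Vector_Spaces.linear (\<lambda>a v l. a * v l) ((*)::'a\<Rightarrow>'a\<Rightarrow>'a) g"
    "g (ev j) = 1" "\<forall>v\<in>C. g v = 0"
    using functional_exists[OF lc e] by blast
  interpret G: Vector_Spaces.linear "\<lambda>a (v::nat\<Rightarrow>'a) l. a * v l" "(*)::'a\<Rightarrow>'a\<Rightarrow>'a" g by fact
  define f where "f l = g (ev l)" for l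
  have "\<forall>v\<in>C. (\<Sum>l<m. f l * v l) = 0"
  proof
    fix v assume vC: "v \<in> C"
    hence v: "v \<in> vecs m" using lc unfolding linear_code_def by auto
    have eq: "v = (\<Sum>l<m. (\<lambda>x. v l * ev l x))"
    proof
      fix x show "v x = (\<Sum>l<m. (\<lambda>x. v l * ev l x)) x"
        using v unfolding sum_fun_apply by (auto simp: sum_ev vecs_def)
    qed
    have "g v = (\<Sum>l<m. g (\<lambda>x. v l * ev l x))" by (subst eq) (rule G.sum)
    also have "\<dots> = (\<Sum>l<m. v l * f l)" using G.scale f_def by simp
    finally show "(\<Sum>l<m. f l * v l) = 0" using g(3) vC by (simp add: mult.commute)
  qed
  thus ?thesis using g(2) f_def by auto
qed

lemma finite_box: "finite (box n t)"
proof -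
  have "inj_on (\<lambda>x. restrict x {..<t}) (box n t)"
  proof (rule inj_onI)
    fix x y assume x: "x \<in> box n t" and y: "y \<in> box n t" and eq: "restrict x {..<t} = restrict y {..<t}"
    show "x = y"
    proof
      fix i show "x i = y i"
      proof (cases "i < t")
        case True thus ?thesis using fun_cong[OF eq, of i] by simp
      next
        case False thus ?thesis using x y by (simp add: box_def)
      qed
    qed
  qed
  moreover have "(\<lambda>x. restrict x {..<t}) ` box n t \<subseteq> PiE {..<t} (\<lambda>i. {..<n i})"
    by (intro image_subsetI, subst restrict_PiE_iff) (auto simp: box_def)
  moreover have "finite (PiE {..<t} (\<lambda>i. {..<n i}))" by (rule finite_PiE) auto
  ultimately show ?thesis using finite_imageD finite_subset by blast
qed

lemma B1: "y \<in> box n k \<Longrightarrow> l < n k \<Longrightarrow> y(k:=l) \<in> box n (Suc k)"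
  by (auto simp: box_def less_Suc_eq)
lemma B2: "x \<in> box n (Suc k) \<Longrightarrow> x(k:=0) \<in> box n k"
  by (auto simp: box_def less_Suc_eq)
lemma B3: "y \<notin> box n k \<Longrightarrow> y k = 0 \<Longrightarrow> y(k:=l) \<notin> box n (Suc k)"
  unfolding box_def apply (clarsimp simp: not_less)
  by (metis Suc_leI fun_upd_other less_Suc_eq_le nat_less_le not_less_eq_eq)
lemma B4: "x \<notin> box n (Suc k) \<Longrightarrow> x k < n k \<Longrightarrow> x(k:=0) \<notin> box n k"
  unfolding box_def apply (clarsimp simp: not_less)
  by (metis Suc_leI fun_upd_other less_Suc_eq_le nat_less_le not_less_eq_eq)
lemma B5: "y \<in> box n k \<Longrightarrow> y k = 0"
  by (auto simp: box_def)
lemma B6: "y \<notin> box n (Suc k) \<Longrightarrow> y k < n k \<Longrightarrow> l < n k \<Longrightarrow> y(k:=l) \<notin> box n (Suc k)"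
  unfolding box_def apply (clarsimp simp: not_less)
  by (metis Suc_leI fun_upd_other less_Suc_eq_le nat_less_le not_less_eq_eq)


lemma col_zero: "col n (\<lambda>_. 0) x i = (\<lambda>_. 0)"
  by (auto simp: col_def)

lemma main:
  fixes C :: "nat \<Rightarrow> (nat \<Rightarrow> 'a::field) set"
  assumes lcs: "\<forall>i<Suc k. linear_code (n i) (C i)"
    and ne: "C k \<noteq> vecs (n k)" and r: "r \<ge> 0"
    and pe: "has_pe n (Suc k) C r"
  shows "has_pe n k C r"
  unfolding has_pe_def
proof
  fix c' assume "c' \<in> boxplus n k C"
  then obtain cs' where cs': "\<forall>i<k. cs' i \<in> dir_code n k C i" and c'eq: "c' = (\<lambda>x. \<Sum>i<k. cs' i x)"
    unfolding boxplus_def by blast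
  have lck: "linear_code (n k) (C k)" using lcs by auto
  obtain j where j: "j < n k" "ev j \<notin> C k" using exists_ev_notin[OF lck ne] by blast
  obtain f where f: "f j = 1" "\<forall>v\<in>C k. (\<Sum>l<n k. f l * v l) = 0"
    using functional2[OF lck j(2)] by blast
  define E where "E c = (\<lambda>x. if x k = j then c (x(k:=0)) else 0)" for c :: "(nat \<Rightarrow> nat) \<Rightarrow> 'a"
  define \<Phi> where "\<Phi> c = (\<lambda>y. if y k = 0 then (\<Sum>l<n k. f l * c (y(k:=l))) else 0)"
    for c :: "(nat \<Rightarrow> nat) \<Rightarrow> 'a"
  have c'arr: "c' \<in> arrays n k"
    using cs' unfolding c'eq arrays_def dir_code_def by auto
  define cs where "cs i = (if i < k then E (cs' i) else (\<lambda>_. 0))" for i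
  have S1: "\<forall>i<Suc k. cs i \<in> dir_code n (Suc k) C i"
  proof (intro allI impI)
    fix i assume i: "i < Suc k"
    show "cs i \<in> dir_code n (Suc k) C i"
    proof (cases "i < k")
      case True
      have ci: "cs' i \<in> dir_code n k C i" using cs' True by auto
      have arr: "E (cs' i) \<in> arrays n (Suc k)"
        unfolding arrays_def mem_Collect_eq
      proof (intro allI impI)
        fix x assume x: "x \<notin> box n (Suc k)"
        show "E (cs' i) x = 0"
        proof (cases "x k = j")
          case True
          hence "x(k:=0) \<notin> box n k" using B4[OF x] j by auto
          then show ?thesis using ci True unfolding E_def dir_code_def arrays_def by auto
        qed (simp add: E_def)
      qed
      have colE: "col n (E (cs' i)) x i = (if x k = j then col n (cs' i) (x(k:=0)) i else (\<lambda>_. 0))" for x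
      proof
        fix m
        have "(x(i:=m)) k = x k" "(x(i:=m))(k:=0) = (x(k:=0))(i:=m)" using True by (auto simp: fun_upd_twist)
        then show "col n (E (cs' i)) x i m = (if x k = j then col n (cs' i) (x(k:=0)) i else (\<lambda>_. 0)) m"
          by (simp add: col_def E_def)
      qed
      have "\<forall>x\<in>box n (Suc k). col n (E (cs' i)) x i \<in> C i"
      proof
        fix x assume x: "x \<in> box n (Suc k)"
        have "(\<lambda>_. 0) \<in> C i" using lcs i by (auto simp: linear_code_def)
        moreover have "col n (cs' i) (x(k:=0)) i \<in> C i" using ci B2[OF x] by (auto simp: dir_code_def)
        ultimately show "col n (E (cs' i)) x i \<in> C i" unfolding colE by auto
      qed
      then show ?thesis using arr True by (simp add: cs_def dir_code_def)
    next
      case False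
      have "(\<lambda>_. 0) \<in> C i" using lcs i by (auto simp: linear_code_def)
      then show ?thesis using False by (simp add: cs_def dir_code_def arrays_def col_zero)
    qed
  qed
  have S2: "E c' = (\<lambda>x. \<Sum>i<Suc k. cs i x)"
  proof
    fix x
    have "(\<Sum>i<Suc k. cs i x) = (\<Sum>i<k. E (cs' i) x)" by (simp add: cs_def)
    also have "\<dots> = E c' x" by (cases "x k = j") (simp_all add: E_def c'eq)
    finally show "E c' x = (\<Sum>i<Suc k. cs i x)" by simp
  qed
  have "E c' \<in> boxplus n (Suc k) C"
    unfolding boxplus_def using S1 S2 by blast
  then obtain ds where ds: "\<forall>i<Suc k. ds i \<in> dir_code n (Suc k) C i"
    and Eeq: "E c' = (\<lambda>x. \<Sum>i<Suc k. ds i x)"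
    and wtE: "real (wt n (Suc k) (E c')) \<ge> r * (\<Sum>i<Suc k. real (n i) * real (col_wt n (Suc k) (ds i) i))"
    using pe unfolding has_pe_def by blast
  have CE: "col n (\<Phi> c) y i = (\<lambda>m. \<Sum>l<n k. f l * col n c (y(k:=l)) i m)"
    if "y k = 0" "i \<noteq> k" for c y i
  proof
    fix m
    show "col n (\<Phi> c) y i m = (\<Sum>l<n k. f l * col n c (y(k:=l)) i m)"
    proof (cases "m < n i")
      case True
      have "(y(i:=m)) k = 0" using that by simp
      moreover have "(y(i:=m))(k:=l) = (y(k:=l))(i:=m)" for l using that by (simp add: fun_upd_twist)
      ultimately show ?thesis using True by (simp add: col_def \<Phi>_def)
    qed (simp add: col_def)
  qed
  have S3: "\<forall>i<k. \<Phi> (ds i) \<in> dir_code n k C i"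
  proof (intro allI impI)
    fix i assume i: "i < k"
    have di: "ds i \<in> dir_code n (Suc k) C i" using ds i by auto
    have arr: "\<Phi> (ds i) \<in> arrays n k"
      unfolding arrays_def mem_Collect_eq
    proof (intro allI impI)
      fix y assume y: "y \<notin> box n k"
      show "\<Phi> (ds i) y = 0"
      proof (cases "y k = 0")
        case True
        have "ds i (y(k:=l)) = 0" for l
          using B3[OF y True] di unfolding dir_code_def arrays_def by auto
        then show ?thesis by (simp add: \<Phi>_def)
      qed (simp add: \<Phi>_def)
    qed
    have "\<forall>y\<in>box n k. col n (\<Phi> (ds i)) y i \<in> C i"
    proof
      fix y assume y: "y \<in> box n k"
      have lci: "linear_code (n i) (C i)" using lcs i by auto
      have "\<forall>l\<in>{..<n k}. col n (ds i) (y(k:=l)) i \<in> C i"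
        using di B1[OF y] unfolding dir_code_def by auto
      from lc_comb[OF lci _ this, of f]
      show "col n (\<Phi> (ds i)) y i \<in> C i" using CE[of y i "ds i"] B5[OF y] i by simp
    qed
    then show "\<Phi> (ds i) \<in> dir_code n k C i" using arr by (simp add: dir_code_def)
  qed
  have PhiE: "\<Phi> (E c') y = c' y" for y
  proof (cases "y k = 0")
    case True
    have "\<Phi> (E c') y = (\<Sum>l<n k. f l * E c' (y(k:=l)))" using True by (simp add: \<Phi>_def)
    also have "\<dots> = (\<Sum>l<n k. if l = j then f j * c' y else 0)"
    proof (rule sum.cong)
      fix l
      have "y(k:=0) = y" using True by auto
      then show "f l * E c' (y(k:=l)) = (if l = j then f j * c' y else 0)" by (simp add: E_def)
    qed simp
    also have "\<dots> = c' y" using j f(1) by simp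
    finally show ?thesis .
  next
    case False
    have "y \<notin> box n k" using False B5[of y n k] by auto
    hence "c' y = 0" using c'arr by (simp add: arrays_def)
    then show ?thesis using False by (simp add: \<Phi>_def)
  qed
  have Phisum: "\<Phi> (\<lambda>x. \<Sum>i<Suc k. ds i x) y = (\<Sum>i<Suc k. \<Phi> (ds i) y)" for y
    by (simp add: \<Phi>_def sum_distrib_left del: sum.lessThan_Suc) (simp add: sum.swap[of _ "{..<n k}"])
  have Phik: "\<Phi> (ds k) y = 0" for y
  proof (cases "y k = 0")
    case True
    show ?thesis
    proof (cases "y \<in> box n (Suc k)")
      case yb: True
      have dk: "ds k \<in> dir_code n (Suc k) C k" using ds by auto
      hence colC: "col n (ds k) y k \<in> C k" using yb by (simp add: dir_code_def)
      have "(\<Sum>l<n k. f l * ds k (y(k:=l))) = (\<Sum>l<n k. f l * col n (ds k) y k l)"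
        by (intro sum.cong) (auto simp: col_def)
      also have "\<dots> = 0" using f(2) colC by blast
      finally show ?thesis using True by (simp add: \<Phi>_def)
    next
      case yb: False
      have dk: "ds k \<in> dir_code n (Suc k) C k" using ds by auto
      have "ds k (y(k:=l)) = 0" if "l < n k" for l
        using B6[OF yb _ that] True j dk unfolding dir_code_def arrays_def by auto
      then show ?thesis using True by (simp add: \<Phi>_def)
    qed
  qed (simp add: \<Phi>_def)
  have S4: "c' = (\<lambda>x. \<Sum>i<k. \<Phi> (ds i) x)"
  proof
    fix y
    have "c' y = \<Phi> (E c') y" by (rule PhiE[symmetric])
    also have "\<dots> = (\<Sum>i<Suc k. \<Phi> (ds i) y)" unfolding Eeq by (rule Phisum)
    also have "\<dots> = (\<Sum>i<k. \<Phi> (ds i) y)" by (simp add: Phik)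
    finally show "c' y = (\<Sum>i<k. \<Phi> (ds i) y)" .
  qed
  have S5: "wt n k c' = wt n (Suc k) (E c')"
  proof -
    have "bij_betw (\<lambda>y. y(k:=j)) {y \<in> box n k. c' y \<noteq> 0} {x \<in> box n (Suc k). E c' x \<noteq> 0}"
    proof (rule bij_betw_byWitness[where f'="\<lambda>x. x(k:=0)"])
      show "\<forall>a\<in>{y \<in> box n k. c' y \<noteq> 0}. a(k := j, k := 0) = a"
        using B5 by fastforce
      show "\<forall>a'\<in>{x \<in> box n (Suc k). E c' x \<noteq> 0}. a'(k := 0, k := j) = a'"
        by (auto simp: E_def split: if_splits)
      show "(\<lambda>y. y(k := j)) ` {y \<in> box n k. c' y \<noteq> 0} \<subseteq> {x \<in> box n (Suc k). E c' x \<noteq> 0}"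
      proof
        fix x assume "x \<in> (\<lambda>y. y(k := j)) ` {y \<in> box n k. c' y \<noteq> 0}"
        then obtain y where y: "y \<in> box n k" "c' y \<noteq> 0" and x: "x = y(k:=j)" by blast
        have "y(k:=0) = y" using B5[OF y(1)] by auto
        then show "x \<in> {x \<in> box n (Suc k). E c' x \<noteq> 0}"
          using B1[OF y(1) j(1)] y(2) x by (simp add: E_def)
      qed
      show "(\<lambda>x. x(k := 0)) ` {x \<in> box n (Suc k). E c' x \<noteq> 0} \<subseteq> {y \<in> box n k. c' y \<noteq> 0}"
        using B2 by (auto simp: E_def split: if_splits)
    qed
    then show ?thesis unfolding wt_def by (rule bij_betw_same_card)
  qed
  have S6: "col_wt n k (\<Phi> (ds i)) i \<le> col_wt n (Suc k) (ds i) i" if i: "i < k" for i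
  proof -
    let ?S = "{y \<in> box n k. y i = 0 \<and> col n (\<Phi> (ds i)) y i \<noteq> (\<lambda>_. 0)}"
    let ?T = "{x \<in> box n (Suc k). x i = 0 \<and> col n (ds i) x i \<noteq> (\<lambda>_. 0)}"
    have ex: "\<exists>l. l < n k \<and> col n (ds i) (y(k:=l)) i \<noteq> (\<lambda>_. 0)" if y: "y \<in> ?S" for y
    proof (rule ccontr)
      assume "\<not> ?thesis"
      hence z: "\<And>l. l < n k \<Longrightarrow> col n (ds i) (y(k:=l)) i = (\<lambda>_. 0)" by blast
      have "col n (\<Phi> (ds i)) y i = (\<lambda>m. \<Sum>l<n k. f l * col n (ds i) (y(k:=l)) i m)"
        using CE[of y i "ds i"] B5[of y n k] y i by auto
      also have "\<dots> = (\<lambda>_. 0)" using z by (simp add: fun_eq_iff)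
      finally show False using y by auto
    qed
    define h where "h y = y(k := (SOME l. l < n k \<and> col n (ds i) (y(k:=l)) i \<noteq> (\<lambda>_. 0)))" for y
    have hT: "h y \<in> ?T" if y: "y \<in> ?S" for y
    proof -
      from someI_ex[OF ex[OF y]] have
        s: "(SOME l. l < n k \<and> col n (ds i) (y(k:=l)) i \<noteq> (\<lambda>_. 0)) < n k"
           "col n (ds i) (h y) i \<noteq> (\<lambda>_. 0)" unfolding h_def by auto
      have "h y \<in> box n (Suc k)" unfolding h_def using B1 y s(1) by auto
      moreover have "h y i = 0" using y i unfolding h_def by auto
      ultimately show ?thesis using s(2) by auto
    qed
    have inj: "inj_on h ?S"
    proof (rule inj_onI)
      fix y1 y2 assume y1: "y1 \<in> ?S" and y2: "y2 \<in> ?S" and eq: "h y1 = h y2"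
      have "y1 = (h y1)(k:=0)" using B5[of y1 n k] y1 unfolding h_def by auto
      also have "\<dots> = (h y2)(k:=0)" using eq by simp
      also have "\<dots> = y2" using B5[of y2 n k] y2 unfolding h_def by auto
      finally show "y1 = y2" .
    qed
    have "finite ?T" by (rule finite_subset[of _ "box n (Suc k)"]) (auto simp: finite_box)
    moreover have "h ` ?S \<subseteq> ?T" by (rule image_subsetI) (rule hT)
    ultimately have "card ?S \<le> card ?T" by (intro card_inj_on_le[OF inj])
    then show ?thesis unfolding col_wt_def .
  qed
  have ineq: "real (wt n k c') \<ge> r * (\<Sum>i<k. real (n i) * real (col_wt n k (\<Phi> (ds i)) i))"
  proof -
    have "(\<Sum>i<k. real (n i) * real (col_wt n k (\<Phi> (ds i)) i))
        \<le> (\<Sum>i<k. real (n i) * real (col_wt n (Suc k) (ds i) i))"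
      by (rule sum_mono) (use S6 in \<open>auto intro: mult_left_mono\<close>)
    also have "\<dots> \<le> (\<Sum>i<Suc k. real (n i) * real (col_wt n (Suc k) (ds i) i))"
      unfolding sum.lessThan_Suc by (intro le_add_same_cancel1[THEN iffD2] mult_nonneg_nonneg) simp_all
    finally have le: "(\<Sum>i<k. real (n i) * real (col_wt n k (\<Phi> (ds i)) i))
        \<le> (\<Sum>i<Suc k. real (n i) * real (col_wt n (Suc k) (ds i) i))" .
    have "r * (\<Sum>i<k. real (n i) * real (col_wt n k (\<Phi> (ds i)) i))
        \<le> r * (\<Sum>i<Suc k. real (n i) * real (col_wt n (Suc k) (ds i) i))"
      by (rule mult_left_mono[OF le r])
    also have "\<dots> \<le> real (wt n k c')" using wtE S5 by simp
    finally show ?thesis .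
  qed
  show "\<exists>cs. (\<forall>i<k. cs i \<in> dir_code n k C i) \<and> c' = (\<lambda>x. \<Sum>i<k. cs i x) \<and>
      real (wt n k c') \<ge> r * (\<Sum>i<k. real (n i) * real (col_wt n k (cs i) i))"
  proof (rule exI[of _ "\<lambda>i. \<Phi> (ds i)"], intro conjI)
    show "\<forall>i<k. \<Phi> (ds i) \<in> dir_code n k C i" by (rule S3)
    show "c' = (\<lambda>x. \<Sum>i<k. \<Phi> (ds i) x)" by (rule S4)
    show "real (wt n k c') \<ge> r * (\<Sum>i<k. real (n i) * real (col_wt n k (\<Phi> (ds i)) i))" by (rule ineq)
  qed
qed


theorem lemmaA1:
  fixes C :: "nat \<Rightarrow> (nat \<Rightarrow> 'a::{field,finite}) set"
    and n :: "nat \<Rightarrow> nat" and t :: nat and \<rho> :: real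
  assumes "t \<ge> 2"
    and "\<forall>i<t. linear_code (n i) (C i)"
    and "product_expansion n t C = ereal \<rho>"
    and "\<rho> > 0"
    and "C (t - 1) \<noteq> vecs (n (t - 1))"
  shows "product_expansion n (t - 1) C \<ge> ereal \<rho>"
proof -
  obtain k where t: "t = Suc k" using assms(1) by (cases t) auto
  have k: "t - 1 = k" using t by simp
  have sub: "{ereal r | r. r \<ge> 0 \<and> has_pe n t C r} \<subseteq> {ereal r | r. r \<ge> 0 \<and> has_pe n (t - 1) C r}"
  proof
    fix x assume "x \<in> {ereal r | r. r \<ge> 0 \<and> has_pe n t C r}"
    then obtain r where r: "x = ereal r" "r \<ge> 0" "has_pe n t C r" by blast
    have "has_pe n k C r"
      using main[of k n C r] assms(2,5) r(2,3) unfolding t k by simp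
    then show "x \<in> {ereal r | r. r \<ge> 0 \<and> has_pe n (t - 1) C r}" using r k by blast
  qed
  have "ereal \<rho> = product_expansion n t C" using assms(3) by simp
  also have "\<dots> \<le> product_expansion n (t - 1) C"
    unfolding product_expansion_def by (rule Sup_subset_mono[OF sub])
  finally show ?thesis .
qed

end
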